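(* Let $0<\beta\le\bar\alpha$ be constants. Let $H$ be a fixed random variable with zero mean, unit variance and a density, and for $\mu\in\mathbb{R}$, $\sigma>0$ let $Z=\mu+\sigma H$ (so $Z$ has mean $\mu$ and variance $\sigma^2$), with density $f_Z$ and c.d.f. $F_Z$. Define the value of renewable energy $$\text{VoR}(\mu,\sigma)=\bar\alpha\int_{-\infty}^{F_Z^{-1}(\beta/\bar\alpha)} z\,f_Z(z)\,dz,$$ where $F_Z^{-1}(a)=\inf\{z:F_Z(z)=a\}$. Then $\text{VoR}$ is increasing in $\mu$ and non-increasing in $\sigma$. Consequently, since $Z(t)=X(t)-w(t)$ with $w(t)$ zero-mean and independent of the renewable energy $X(t)$, the value of renewable energy is increasing with the mean of $X(t)$ and non-increasing with the variance of $X(t)$ (when the distribution of $Z(t)$ varies in such a location–scale family).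
   Context: In the model, $X(t)$ is the renewable power available in slot $t$, $w(t)=\sum_n w_n(t)$ is the aggregate zero-mean random deviation of user loads (independent of $X(t)$), $Z(t)=X(t)-w(t)$ is the effective renewable energy, $\beta$ is the day-ahead power price and $\bar\alpha$ the expected real-time power price. $\text{VoR}$ is the reduction of the minimal expected procurement cost relative to $\beta L^{\mathsf{d}}$ (the cost without renewables) when the optimal base power is positive. *)

theory Defs
  imports "HOL-Probability.Probability"
begin

definition cdf_of :: "'a measure \<Rightarrow> ('a \<Rightarrow> real) \<Rightarrow> real \<Rightarrow> real" where
  "cdf_of M Z z = measure M {\<omega> \<in> space M. Z \<omega> \<le> z}"

text \<open>Generalised inverse F^{-1}(a) = inf {z. F z = a}, taken in the extended
  reals so that the infimum of the empty set is +infinity.\<close>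
definition inv_cdf :: "(real \<Rightarrow> real) \<Rightarrow> real \<Rightarrow> ereal" where
  "inv_cdf F a = Inf {ereal z | z. F z = a}"

definition VoR :: "real \<Rightarrow> real \<Rightarrow> 'a measure \<Rightarrow> ('a \<Rightarrow> real) \<Rightarrow> (real \<Rightarrow> ennreal) \<Rightarrow> real" where
  "VoR alpha_bar beta M Z f =
     alpha_bar * (LINT z : {z. ereal z \<le> inv_cdf (cdf_of M Z) (beta / alpha_bar)} | lborel.
                    z * enn2real (f z))"

end

theory Submission
  imports Defs
begin

lemma (in prob_space) vor_int:
  assumes D: "distributed M lborel Z f" and S: "S \<in> sets borel"
  shows "(LINT z:S|lborel. z * enn2real (f z)) = (\<integral>\<omega>. indicator S (Z \<omega>) * Z \<omega> \<partial>M)"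
proof -
  have fm[measurable]: "f \<in> borel_measurable lborel" using distributed_borel_measurable[OF D] .
  have Zm: "Z \<in> measurable M lborel" using distributed_measurable[OF D] .
  have eq: "distr M lborel Z = density lborel f" using distributed_distr_eq_density[OF D] .
  interpret P: prob_space "density lborel f" using prob_space_distr[OF Zm] eq by simp
  have "(\<integral>\<^sup>+z. f z \<partial>lborel) = 1"
    using P.emeasure_space_1 by (simp add: emeasure_density)
  then have "AE z in lborel. f z \<noteq> \<infinity>" by (intro nn_integral_PInf_AE) auto
  then have "AE z in lborel. f z = ennreal (enn2real (f z))"
    by eventually_elim (simp add: ennreal_enn2real_if)
  then have D2: "distributed M lborel Z (\<lambda>z. ennreal (enn2real (f z)))"
    using D by (subst distributed_cong_density[symmetric]) auto
  have "(\<integral>z. enn2real (f z) * (indicator S z * z) \<partial>lborel) = (\<integral>\<omega>. indicator S (Z \<omega>) * Z \<omega> \<partial>M)"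
    using S by (intro distributed_integral[OF D2]) auto
  moreover have "(LINT z:S|lborel. z * enn2real (f z)) = (\<integral>z. enn2real (f z) * (indicator S z * z) \<partial>lborel)"
    unfolding set_lebesgue_integral_def by (intro Bochner_Integration.integral_cong) (auto simp: indicator_def)
  ultimately show ?thesis by simp
qed


lemma (in prob_space) cdf_link:
  assumes Hm: "H \<in> borel_measurable M"
  shows "cdf (distr M borel H) x = cdf_of M H x"
  using Hm unfolding cdf_def cdf_of_def
  by (subst measure_distr) (auto simp: vimage_def Int_def conj_commute)

lemma (in prob_space) key:
  assumes Hm: "H \<in> borel_measurable M" and a: "0 < a"
  defines "A \<equiv> {h. \<forall>h'. cdf_of M H h' = a \<longrightarrow> h \<le> h'}"
  shows "A \<in> sets borel \<and> 0 < prob {\<omega>\<in>space M. H \<omega> \<in> A}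
     \<and> ((\<forall>x\<in>A. x \<le> 0) \<or> (\<forall>x. x \<notin> A \<longrightarrow> 0 \<le> x))"
proof -
  let ?F = "cdf_of M H"
  interpret R: real_distribution "distr M borel H" using Hm by simp
  have F: "\<And>x. ?F x = cdf (distr M borel H) x" using cdf_link[OF Hm] by simp
  show ?thesis
  proof (cases "\<exists>h. ?F h = a")
    case False
    then have "A = UNIV" unfolding A_def by auto
    then show ?thesis by (simp add: prob_space)
  next
    case True
    let ?X = "{h. ?F h = a}"
    have "eventually (\<lambda>x. cdf (distr M borel H) x < a) at_bot"
      using R.cdf_lim_at_bot a by (rule order_tendstoD)
    then obtain L where L: "\<And>x. x \<le> L \<Longrightarrow> ?F x < a"
      unfolding eventually_at_bot_linorder F by blast
    have bdd: "bdd_below ?X"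
      proof (rule bdd_belowI[of _ L])
      fix x assume "x \<in> ?X"
      then show "L \<le> x" using L[of x] by (cases "x \<le> L") auto
    qed
    have ne: "?X \<noteq> {}" using True by auto
    define t where "t = Inf ?X"
    have At: "A = {..t}" unfolding A_def t_def
      using le_cInf_iff[OF ne bdd] by (auto simp: atMost_def)
    have mono: "\<And>x y. x \<le> y \<Longrightarrow> ?F x \<le> ?F y" using R.cdf_nondecreasing F by simp
    have "eventually (\<lambda>x. a \<le> ?F x) (at_right t)"
      unfolding eventually_at_right_field
    proof (intro exI[of _ "t+1"] conjI allI impI)
      fix x assume "x > t" "x < t + 1"
      then have "Inf ?X < x" unfolding t_def by simp
      then obtain h where "h \<in> ?X" "h < x" using cInf_lessD[OF ne] by blast
      then show "a \<le> ?F x" using mono[of h x] by auto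
    qed simp
    moreover have "(?F \<longlongrightarrow> ?F t) (at_right t)"
      using R.cdf_is_right_cont[of t] unfolding F continuous_within by simp
    ultimately have "a \<le> ?F t"
      by (intro tendsto_lowerbound[where F="at_right t"]) auto
    moreover have "prob {\<omega>\<in>space M. H \<omega> \<in> A} = ?F t"
      unfolding At cdf_of_def by simp
    ultimately show ?thesis using a At by (cases "t \<le> 0") auto
  qed
qed

lemma (in prob_space) eneg:
  fixes H :: "'a \<Rightarrow> real"
  assumes I: "integrable M H" and E: "expectation H = 0" and B: "B \<in> events"
    and C: "(\<forall>\<omega>\<in>B. H \<omega> \<le> 0) \<or> (\<forall>\<omega>\<in>space M - B. 0 \<le> H \<omega>)"
  shows "(\<integral>\<omega>. indicator B \<omega> * H \<omega> \<partial>M) \<le> 0"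
  using C
proof
  assume h: "\<forall>\<omega>\<in>B. H \<omega> \<le> 0"
  have "0 \<le> (\<integral>\<omega>. - (indicator B \<omega> * H \<omega>) \<partial>M)"
    using h by (intro Bochner_Integration.integral_nonneg) (auto simp: indicator_def)
  then show ?thesis by simp
next
  assume h: "\<forall>\<omega>\<in>space M - B. 0 \<le> H \<omega>"
  have I1: "integrable M (\<lambda>\<omega>. indicator B \<omega> * H \<omega>)"
    using I B using integrable_real_mult_indicator by (simp add: mult.commute)
  have I2: "integrable M (\<lambda>\<omega>. indicator (space M - B) \<omega> * H \<omega>)"
    using integrable_real_mult_indicator[of "space M - B" M H] I B by (simp add: mult.commute)
  have "(\<integral>\<omega>. H \<omega> \<partial>M) = (\<integral>\<omega>. indicator B \<omega> * H \<omega> + indicator (space M - B) \<omega> * H \<omega> \<partial>M)"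
    by (intro Bochner_Integration.integral_cong) (auto simp: indicator_def)
  also have "\<dots> = (\<integral>\<omega>. indicator B \<omega> * H \<omega> \<partial>M) + (\<integral>\<omega>. indicator (space M - B) \<omega> * H \<omega> \<partial>M)"
    using I1 I2 by simp
  finally have eq: "(\<integral>\<omega>. indicator B \<omega> * H \<omega> \<partial>M) = - (\<integral>\<omega>. indicator (space M - B) \<omega> * H \<omega> \<partial>M)"
    using E by simp
  have "0 \<le> (\<integral>\<omega>. indicator (space M - B) \<omega> * H \<omega> \<partial>M)"
    using h by (intro Bochner_Integration.integral_nonneg) (auto simp: indicator_def)
  then show ?thesis using eq by simp
qed

lemma (in prob_space) vor_formula:
  assumes Hm: "H \<in> borel_measurable M" and I: "integrable M H" and s: "0 < \<sigma>"
    and D: "distributed M lborel (\<lambda>\<omega>. \<mu> + \<sigma> * H \<omega>) f"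
    and A: "A = {h. \<forall>h'. cdf_of M H h' = a \<longrightarrow> h \<le> h'}" and As: "A \<in> sets borel"
  shows "(LINT z : {z. ereal z \<le> inv_cdf (cdf_of M (\<lambda>\<omega>. \<mu> + \<sigma> * H \<omega>)) a} | lborel. z * enn2real (f z))
     = \<mu> * prob {\<omega>\<in>space M. H \<omega> \<in> A} + \<sigma> * (\<integral>\<omega>. indicator {\<omega>\<in>space M. H \<omega> \<in> A} \<omega> * H \<omega> \<partial>M)"
proof -
  define Z where "Z = (\<lambda>\<omega>. \<mu> + \<sigma> * H \<omega>)"
  define S where "S = {z. ereal z \<le> inv_cdf (cdf_of M Z) a}"
  define B where "B = {\<omega>\<in>space M. H \<omega> \<in> A}"
  have Bev: "B \<in> events" unfolding B_def using Hm As by measurable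
  have le: "\<And>x w. (\<mu> + \<sigma> * x \<le> w) = (x \<le> (w - \<mu>) / \<sigma>)"
    using s by (auto simp: pos_le_divide_eq algebra_simps)
  have cdfZ: "\<And>w. cdf_of M Z w = cdf_of M H ((w - \<mu>) / \<sigma>)"
    unfolding cdf_of_def Z_def le ..
  have memS: "\<And>z. z \<in> S \<longleftrightarrow> (z - \<mu>) / \<sigma> \<in> A"
  proof -
    fix z
    have "z \<in> S \<longleftrightarrow> (\<forall>w. cdf_of M H ((w - \<mu>) / \<sigma>) = a \<longrightarrow> z \<le> w)"
      unfolding S_def inv_cdf_def cdfZ by (auto simp: le_Inf_iff)
    also have "\<dots> \<longleftrightarrow> (\<forall>h. cdf_of M H h = a \<longrightarrow> (z - \<mu>) / \<sigma> \<le> h)"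
    proof
      assume h1: "\<forall>w. cdf_of M H ((w - \<mu>) / \<sigma>) = a \<longrightarrow> z \<le> w"
      show "\<forall>h. cdf_of M H h = a \<longrightarrow> (z - \<mu>) / \<sigma> \<le> h"
      proof (intro allI impI)
        fix h assume "cdf_of M H h = a"
        moreover have "((\<mu> + \<sigma> * h) - \<mu>) / \<sigma> = h" using s by simp
        ultimately have "z \<le> \<mu> + \<sigma> * h" using h1 by metis
        then show "(z - \<mu>) / \<sigma> \<le> h" using s by (simp add: pos_divide_le_eq algebra_simps)
      qed
    next
      assume h1: "\<forall>h. cdf_of M H h = a \<longrightarrow> (z - \<mu>) / \<sigma> \<le> h"
      show "\<forall>w. cdf_of M H ((w - \<mu>) / \<sigma>) = a \<longrightarrow> z \<le> w"
        using h1 s by (auto simp: divide_le_cancel)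
    qed
    finally show "z \<in> S \<longleftrightarrow> (z - \<mu>) / \<sigma> \<in> A" unfolding A by simp
  qed
  have "(\<lambda>z. (z - \<mu>) / \<sigma>) -` A \<inter> space borel \<in> sets borel"
    using As by measurable
  moreover have "(\<lambda>z. (z - \<mu>) / \<sigma>) -` A \<inter> space borel = S" using memS by auto
  ultimately have Ss: "S \<in> sets borel" by simp
  have "(LINT z : S | lborel. z * enn2real (f z)) = (\<integral>\<omega>. indicator S (Z \<omega>) * Z \<omega> \<partial>M)"
    using vor_int[OF D[folded Z_def] Ss] .
  also have "\<dots> = (\<integral>\<omega>. \<mu> * indicator B \<omega> + \<sigma> * (indicator B \<omega> * H \<omega>) \<partial>M)"
  proof (intro Bochner_Integration.integral_cong refl)
    fix \<omega> assume "\<omega> \<in> space M"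
    moreover have "(Z \<omega> - \<mu>) / \<sigma> = H \<omega>" using s by (simp add: Z_def)
    ultimately show "indicator S (Z \<omega>) * Z \<omega> = \<mu> * indicator B \<omega> + \<sigma> * (indicator B \<omega> * H \<omega>)"
      using memS[of "Z \<omega>"] by (auto simp: B_def Z_def indicator_def algebra_simps)
  qed
  also have "\<dots> = \<mu> * prob B + \<sigma> * (\<integral>\<omega>. indicator B \<omega> * H \<omega> \<partial>M)"
  proof -
    have I1: "integrable M (\<lambda>\<omega>. indicator B \<omega> * H \<omega>)"
      using I Bev using integrable_real_mult_indicator by (simp add: mult.commute)
    have I0: "integrable M (\<lambda>\<omega>. indicator B \<omega> :: real)"
      using Bev by (intro integrable_real_indicator) (auto simp: emeasure_eq_measure)
    show ?thesis using I1 I0 Bev by simp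
  qed
  finally show ?thesis unfolding S_def Z_def B_def .
qed
theorem lemma2:
  fixes M :: "'a measure" and H :: "'a \<Rightarrow> real" and g :: "real \<Rightarrow> ennreal"
    and beta alpha_bar :: real
  assumes "prob_space M"
    and "0 < beta" and "beta \<le> alpha_bar"
    and "distributed M lborel H g"
    and "integrable M H"
    and "prob_space.expectation M H = 0"
    and "prob_space.variance M H = 1"
  shows "(\<forall>\<mu> \<mu>' \<sigma> f f'. 0 < \<sigma> \<and> \<mu> < \<mu>'
            \<and> distributed M lborel (\<lambda>\<omega>. \<mu> + \<sigma> * H \<omega>) f
            \<and> distributed M lborel (\<lambda>\<omega>. \<mu>' + \<sigma> * H \<omega>) f'
            \<longrightarrow> VoR alpha_bar beta M (\<lambda>\<omega>. \<mu> + \<sigma> * H \<omega>) f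
                < VoR alpha_bar beta M (\<lambda>\<omega>. \<mu>' + \<sigma> * H \<omega>) f')
       \<and> (\<forall>\<mu> \<sigma> \<sigma>' f f'. 0 < \<sigma> \<and> \<sigma> \<le> \<sigma>'
            \<and> distributed M lborel (\<lambda>\<omega>. \<mu> + \<sigma> * H \<omega>) f
            \<and> distributed M lborel (\<lambda>\<omega>. \<mu> + \<sigma>' * H \<omega>) f'
            \<longrightarrow> VoR alpha_bar beta M (\<lambda>\<omega>. \<mu> + \<sigma>' * H \<omega>) f'
                \<le> VoR alpha_bar beta M (\<lambda>\<omega>. \<mu> + \<sigma> * H \<omega>) f)"
  proof -
  interpret prob_space M by (rule assms(1))
  have Hm: "H \<in> borel_measurable M" using distributed_measurable[OF assms(4)] by simp
  have I: "integrable M H" by (rule assms(5))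
  have E: "expectation H = 0" by (rule assms(6))
  have ab: "0 < alpha_bar" using assms(2,3) by simp
  define a where "a = beta / alpha_bar"
  have a: "0 < a" unfolding a_def using assms(2) ab by simp
  define A where "A = {h. \<forall>h'. cdf_of M H h' = a \<longrightarrow> h \<le> h'}"
  define B where "B = {\<omega>\<in>space M. H \<omega> \<in> A}"
  have K: "A \<in> sets borel \<and> 0 < prob B \<and> ((\<forall>x\<in>A. x \<le> 0) \<or> (\<forall>x. x \<notin> A \<longrightarrow> 0 \<le> x))"
    unfolding A_def B_def by (rule key[OF Hm a])
  then have As: "A \<in> sets borel" and p: "0 < prob B" by auto
  have Bev: "B \<in> events" unfolding B_def using Hm As by measurable
  have "(\<forall>\<omega>\<in>B. H \<omega> \<le> 0) \<or> (\<forall>\<omega>\<in>space M - B. 0 \<le> H \<omega>)"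
    using K unfolding B_def by auto
  then have e: "(\<integral>\<omega>. indicator B \<omega> * H \<omega> \<partial>M) \<le> 0"
    by (rule eneg[OF I E Bev])
  define e where "e = (\<integral>\<omega>. indicator B \<omega> * H \<omega> \<partial>M)"
  have V: "\<And>\<mu> \<sigma> f. 0 < \<sigma> \<Longrightarrow> distributed M lborel (\<lambda>\<omega>. \<mu> + \<sigma> * H \<omega>) f \<Longrightarrow>
      VoR alpha_bar beta M (\<lambda>\<omega>. \<mu> + \<sigma> * H \<omega>) f = alpha_bar * (\<mu> * prob B + \<sigma> * e)"
    unfolding VoR_def a_def[symmetric] B_def e_def
    by (subst vor_formula[OF Hm I _ _ A_def As]) auto
  show ?thesis
  proof (intro conjI allI impI)
    fix \<mu> \<mu>' \<sigma> f f'
    assume h: "0 < \<sigma> \<and> \<mu> < \<mu>' \<and> distributed M lborel (\<lambda>\<omega>. \<mu> + \<sigma> * H \<omega>) f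
            \<and> distributed M lborel (\<lambda>\<omega>. \<mu>' + \<sigma> * H \<omega>) f'"
    have "\<mu> * prob B < \<mu>' * prob B" using h p by simp
    then show "VoR alpha_bar beta M (\<lambda>\<omega>. \<mu> + \<sigma> * H \<omega>) f
                < VoR alpha_bar beta M (\<lambda>\<omega>. \<mu>' + \<sigma> * H \<omega>) f'"
      using h V ab by simp
  next
    fix \<mu> \<sigma> \<sigma>' f f'
    assume h: "0 < \<sigma> \<and> \<sigma> \<le> \<sigma>'
            \<and> distributed M lborel (\<lambda>\<omega>. \<mu> + \<sigma> * H \<omega>) f
            \<and> distributed M lborel (\<lambda>\<omega>. \<mu> + \<sigma>' * H \<omega>) f'"
    have "\<sigma>' * e \<le> \<sigma> * e" using h e unfolding e_def by (intro mult_right_mono_neg) auto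
    then show "VoR alpha_bar beta M (\<lambda>\<omega>. \<mu> + \<sigma>' * H \<omega>) f'
                \<le> VoR alpha_bar beta M (\<lambda>\<omega>. \<mu> + \<sigma> * H \<omega>) f"
      using h V[of \<sigma> \<mu> f] V[of \<sigma>' \<mu> f'] ab by simp
  qed
qed

end
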